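(* Let $\nu:S\setminus\{0\}\to C$ be a well-ordered injective valuation on a $\Bbbk$-vector space $S$ and let $\{S_i\}_{i\in I}$ be a family of subspaces of $S$. Then the family is $\nu$-compatible if and only if there exists a basis $\mathbf B$ of $S$ adapted to $\nu$ such that $\mathbf B\cap S_i$ is a basis of $S_i$ for every $i\in I$. Moreover, in this case, for every subset $J\subseteq I$, $\mathbf B\cap\bigcap_{j\in J}S_j$ is a basis of $\bigcap_{j\in J}S_j$, and $\nu\big((\sum_{j\in J}S_j)\setminus\{0\}\big)=\bigcup_{j\in J}\nu(S_j\setminus\{0\})$.
   Context: A valuation on a $\Bbbk$-vector space $S$ with values in a totally ordered set $(C,\le)$ is a map $\nu:S\setminus\{0\}\to C$ such that $\nu(cx)=\nu(x)$ for all $c\in\Bbbk^\times$, $x\ne0$, and $\nu(x+y)\le\max(\nu(x),\nu(y))$ whenever $x,y,x+y\neq 0$. It is well-ordered if its image is well-ordered; it is injective if there is a basis $\mathbf B$ of $S$ with $\nu|_{\mathbf B}$ injective, and such a basis is called adapted to $\nu$. A family $\{S_i\}_{i\in I}$ of subspaces is called $\nu$-compatible if for every nonempty $J\subseteq I$ one has $\nu\big((\bigcap_{j\in J}S_j)\setminus\{0\}\big)=\bigcap_{j\in J}\nu(S_j\setminus\{0\})$ (for $J=\emptyset$ the intersection is read as $S$). *)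

theory Defs
  imports Main "HOL.Vector_Spaces"
begin

(* A k-vector space is modelled by a type 'v with scalar multiplication
   scale :: 'k::field => 'v => 'v satisfying the locale vector_space.
   The ambient space S is the whole type 'v (UNIV). *)

definition is_basis_of :: "('k::field \<Rightarrow> 'v::ab_group_add \<Rightarrow> 'v) \<Rightarrow> 'v set \<Rightarrow> 'v set \<Rightarrow> bool" where
  "is_basis_of scale B V \<longleftrightarrow> B \<subseteq> V \<and> \<not> module.dependent scale B \<and> module.span scale B = V"

definition is_valuation :: "('k::field \<Rightarrow> 'v::ab_group_add \<Rightarrow> 'v) \<Rightarrow> ('v \<Rightarrow> 'c::linorder) \<Rightarrow> bool" where
  "is_valuation scale \<nu> \<longleftrightarrow>
     (\<forall>c x. c \<noteq> 0 \<longrightarrow> x \<noteq> 0 \<longrightarrow> \<nu> (scale c x) = \<nu> x) \<and>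
     (\<forall>x y. x \<noteq> 0 \<longrightarrow> y \<noteq> 0 \<longrightarrow> x + y \<noteq> 0 \<longrightarrow> \<nu> (x + y) \<le> max (\<nu> x) (\<nu> y))"

definition well_ordered_set :: "'c::linorder set \<Rightarrow> bool" where
  "well_ordered_set A \<longleftrightarrow> (\<forall>X \<subseteq> A. X \<noteq> {} \<longrightarrow> (\<exists>m\<in>X. \<forall>x\<in>X. m \<le> x))"

definition well_ordered_valuation :: "('v::ab_group_add \<Rightarrow> 'c::linorder) \<Rightarrow> bool" where
  "well_ordered_valuation \<nu> \<longleftrightarrow> well_ordered_set (\<nu> ` (UNIV - {0}))"

definition adapted_basis :: "('k::field \<Rightarrow> 'v::ab_group_add \<Rightarrow> 'v) \<Rightarrow> ('v \<Rightarrow> 'c::linorder) \<Rightarrow> 'v set \<Rightarrow> bool" where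
  "adapted_basis scale \<nu> B \<longleftrightarrow> is_basis_of scale B UNIV \<and> inj_on \<nu> B"

definition injective_valuation :: "('k::field \<Rightarrow> 'v::ab_group_add \<Rightarrow> 'v) \<Rightarrow> ('v \<Rightarrow> 'c::linorder) \<Rightarrow> bool" where
  "injective_valuation scale \<nu> \<longleftrightarrow> (\<exists>B. adapted_basis scale \<nu> B)"

definition nu_compatible :: "('v::zero \<Rightarrow> 'c) \<Rightarrow> 'i set \<Rightarrow> ('i \<Rightarrow> 'v set) \<Rightarrow> bool" where
  "nu_compatible \<nu> I S \<longleftrightarrow>
     (\<forall>J \<subseteq> I. J \<noteq> {} \<longrightarrow> \<nu> ` ((\<Inter>j\<in>J. S j) - {0}) = (\<Inter>j\<in>J. \<nu> ` (S j - {0})))"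

end

theory Submission
  imports Defs
begin

context vector_space
begin

lemma val_scale: "is_valuation scale \<nu> \<Longrightarrow> c \<noteq> 0 \<Longrightarrow> x \<noteq> 0 \<Longrightarrow> \<nu> (c *s x) = \<nu> x"
  unfolding is_valuation_def by blast

lemma val_neg: "is_valuation scale \<nu> \<Longrightarrow> y \<noteq> 0 \<Longrightarrow> \<nu> (- y) = \<nu> y"
proof -
  assume v: "is_valuation scale \<nu>" and y: "y \<noteq> 0"
  have "- y = (-1) *s y" by (simp add: scale_minus_left)
  then show ?thesis using val_scale[OF v, of "-1" y] y by simp
qed

lemma val_add: "is_valuation scale \<nu> \<Longrightarrow> x \<noteq> 0 \<Longrightarrow> y \<noteq> 0 \<Longrightarrow> x + y \<noteq> 0 \<Longrightarrow> \<nu> (x + y) \<le> max (\<nu> x) (\<nu> y)"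
  unfolding is_valuation_def by blast

lemma val_add_lt:
  assumes v: "is_valuation scale \<nu>" and y: "y \<noteq> 0" and z: "z \<noteq> 0" and lt: "\<nu> y < \<nu> z"
  shows "y + z \<noteq> 0 \<and> \<nu> (y + z) = \<nu> z"
proof -
  have nz: "y + z \<noteq> 0"
  proof
    assume "y + z = 0"
    then have "z = - y" by (metis neg_eq_iff_add_eq_0)
    then show False using val_neg[OF v y] lt by simp
  qed
  have "\<nu> z = \<nu> ((y + z) + (- y))" by simp
  also have "\<dots> \<le> max (\<nu> (y + z)) (\<nu> (- y))"
    using val_add[OF v nz, of "- y"] y z by simp
  finally have "\<nu> z \<le> max (\<nu> (y + z)) (\<nu> y)" using val_neg[OF v y] by simp
  then have "\<nu> z \<le> \<nu> (y + z)" using lt by (metis le_max_iff_disj not_le)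
  moreover have "\<nu> (y + z) \<le> \<nu> z" using val_add[OF v y z nz] lt by simp
  ultimately show ?thesis using nz by simp
qed

lemma val_add_distinct:
  assumes v: "is_valuation scale \<nu>" and y: "y \<noteq> 0" and z: "z \<noteq> 0" and ne: "\<nu> y \<noteq> \<nu> z"
  shows "y + z \<noteq> 0 \<and> \<nu> (y + z) = max (\<nu> y) (\<nu> z)"
proof (cases "\<nu> y < \<nu> z")
  case True then show ?thesis using val_add_lt[OF v y z] by (simp add: max_absorb2 less_imp_le)
next
  case False
  then have "\<nu> z < \<nu> y" using ne by simp
  then have "z + y \<noteq> 0 \<and> \<nu> (z + y) = \<nu> y" using val_add_lt[OF v z y] by blast
  moreover have "max (\<nu> y) (\<nu> z) = \<nu> y" using \<open>\<nu> z < \<nu> y\<close> by (metis max.absorb1 less_imp_le)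
  ultimately show ?thesis by (metis add.commute)
qed

lemma M0:
  assumes v: "is_valuation scale \<nu>"
  shows "finite T \<Longrightarrow> T \<noteq> {} \<Longrightarrow> 0 \<notin> T \<Longrightarrow> inj_on \<nu> T \<Longrightarrow> \<forall>t\<in>T. r t \<noteq> 0 \<Longrightarrow>
    (\<Sum>t\<in>T. r t *s t) \<noteq> 0 \<and> \<nu> (\<Sum>t\<in>T. r t *s t) = Max (\<nu> ` T)"
proof (induction T rule: finite_ne_induct)
  case (singleton x)
  then show ?case using val_scale[OF v] by auto
next
  case (insert x F)
  let ?s = "\<Sum>t\<in>F. r t *s t"
  have IH: "?s \<noteq> 0 \<and> \<nu> ?s = Max (\<nu> ` F)" using insert by auto
  have "Max (\<nu> ` F) \<in> \<nu> ` F" using insert by (intro Max_in) auto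
  then obtain f where f: "f \<in> F" "\<nu> f = Max (\<nu> ` F)" by auto
  have x0: "x \<noteq> 0" "r x \<noteq> 0" using insert by auto
  have "\<nu> x \<noteq> \<nu> f" using insert.prems(2) f(1) insert.hyps by (auto simp: inj_on_def)
  then have ne: "\<nu> (r x *s x) \<noteq> \<nu> ?s" using IH f val_scale[OF v x0(2) x0(1)] by simp
  have "r x *s x \<noteq> 0" using x0 by simp
  from val_add_distinct[OF v this _ ne] IH
  have "r x *s x + ?s \<noteq> 0 \<and> \<nu> (r x *s x + ?s) = max (\<nu> x) (Max (\<nu> ` F))"
    using val_scale[OF v x0(2) x0(1)] by simp
  moreover have "(\<Sum>t\<in>insert x F. r t *s t) = r x *s x + ?s" using insert by simp
  moreover have "Max (\<nu> ` insert x F) = max (\<nu> x) (Max (\<nu> ` F))" using insert by simp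
  ultimately show ?case by simp
qed

lemma M:
  assumes v: "is_valuation scale \<nu>" and A0: "0 \<notin> A" and inj: "inj_on \<nu> A"
    and x: "x \<in> span A" "x \<noteq> 0"
  shows "\<exists>T r. finite T \<and> T \<subseteq> A \<and> T \<noteq> {} \<and> (\<forall>t\<in>T. r t \<noteq> 0) \<and>
     x = (\<Sum>t\<in>T. r t *s t) \<and> \<nu> x = Max (\<nu> ` T)"
proof -
  obtain T r where T: "finite T" "T \<subseteq> A" "x = (\<Sum>t\<in>T. r t *s t)"
    using x(1) unfolding span_explicit by blast
  define T' where "T' = {t\<in>T. r t \<noteq> 0}"
  have T'T: "T' \<subseteq> T" "finite T'" using T unfolding T'_def by auto
  have eq: "(\<Sum>t\<in>T. r t *s t) = (\<Sum>t\<in>T'. r t *s t)"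
    by (rule sum.mono_neutral_right) (use T T'T in \<open>auto simp: T'_def\<close>)
  have ne: "T' \<noteq> {}" using x(2) T(3) eq by auto
  have "(\<Sum>t\<in>T'. r t *s t) \<noteq> 0 \<and> \<nu> (\<Sum>t\<in>T'. r t *s t) = Max (\<nu> ` T')"
    by (rule M0[OF v T'T(2) ne]) (use A0 inj T T'T in \<open>auto simp: T'_def intro: inj_on_subset\<close>)
  then show ?thesis using T T'T ne eq by (intro exI[of _ T'] exI[of _ r]) (auto simp: T'_def)
qed

lemma M1:
  assumes v: "is_valuation scale \<nu>" and A0: "0 \<notin> A" and inj: "inj_on \<nu> A"
    and x: "x \<in> span A" "x \<noteq> 0"
  shows "\<exists>a\<in>A. \<nu> x = \<nu> a"
proof -
  obtain T r where T: "finite T" "T \<subseteq> A" "T \<noteq> {}" "\<nu> x = Max (\<nu> ` T)"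
    using M[OF assms] by blast
  have "Max (\<nu> ` T) \<in> \<nu> ` T" using T by (intro Max_in) auto
  then obtain a where a: "a \<in> T" "Max (\<nu> ` T) = \<nu> a" by blast
  show ?thesis using a T by (intro bexI[of _ a]) auto
qed

lemma Ind:
  assumes v: "is_valuation scale \<nu>" and A0: "0 \<notin> A" and inj: "inj_on \<nu> A"
  shows "\<not> dependent A"
proof
  assume "dependent A"
  then obtain t u where t: "finite t" "t \<subseteq> A" "(\<Sum>v\<in>t. u v *s v) = 0" "\<exists>v\<in>t. u v \<noteq> 0"
    unfolding dependent_explicit by blast
  define T' where "T' = {v\<in>t. u v \<noteq> 0}"
  have T'T: "T' \<subseteq> t" "finite T'" "T' \<noteq> {}" using t unfolding T'_def by auto
  have eq: "(\<Sum>v\<in>t. u v *s v) = (\<Sum>v\<in>T'. u v *s v)"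
    by (rule sum.mono_neutral_right) (use t T'T in \<open>auto simp: T'_def\<close>)
  have "(\<Sum>v\<in>T'. u v *s v) \<noteq> 0 \<and> \<nu> (\<Sum>v\<in>T'. u v *s v) = Max (\<nu> ` T')"
    by (rule M0[OF v T'T(2) T'T(3)]) (use A0 inj t T'T in \<open>auto simp: T'_def intro: inj_on_subset\<close>)
  then show False using eq t(3) by simp
qed

lemma Onedim:
  assumes v: "is_valuation scale \<nu>" and B0: "\<not> dependent B0" "span B0 = UNIV" "inj_on \<nu> B0"
    and x: "x \<noteq> 0" and y: "y \<noteq> 0" and eq: "\<nu> x = \<nu> y"
  shows "\<exists>a. x - a *s y = 0 \<or> \<nu> (x - a *s y) < \<nu> x"
proof -
  have A0: "0 \<notin> B0" using B0(1) dependent_zero by blast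
  obtain T r where T: "finite T" "T \<subseteq> B0" "T \<noteq> {}" "\<forall>t\<in>T. r t \<noteq> 0"
    "x = (\<Sum>t\<in>T. r t *s t)" "\<nu> x = Max (\<nu> ` T)"
    using M[OF v A0 B0(3), of x] x B0(2) by blast
  obtain U s where U: "finite U" "U \<subseteq> B0" "U \<noteq> {}" "\<forall>t\<in>U. s t \<noteq> 0"
    "y = (\<Sum>t\<in>U. s t *s t)" "\<nu> y = Max (\<nu> ` U)"
    using M[OF v A0 B0(3), of y] y B0(2) by blast
  have "Max (\<nu> ` T) \<in> \<nu> ` T" using T by (intro Max_in) auto
  then obtain b where b: "b \<in> T" "\<nu> b = \<nu> x" using T(6) by auto
  have "Max (\<nu> ` U) \<in> \<nu> ` U" using U by (intro Max_in) auto
  then obtain b' where b': "b' \<in> U" "\<nu> b' = \<nu> y" using U(6) by auto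
  have bb: "b' = b" using b b' T(2) U(2) eq B0(3) by (metis inj_onD subsetD)
  define a where "a = r b / s b"
  define x' where "x' = (\<Sum>t\<in>T-{b}. r t *s t)"
  define y' where "y' = (\<Sum>t\<in>U-{b}. s t *s t)"
  have xs: "x = r b *s b + x'" using T b by (simp add: x'_def sum.remove)
  have ys: "y = s b *s b + y'" using U b' bb by (simp add: y'_def sum.remove)
  have sb: "s b \<noteq> 0" using U(4) b' bb by auto
  have asb: "a * s b = r b" using sb by (simp add: a_def)
  have ab: "a *s (s b *s b) = r b *s b" using asb by (metis scale_scale)
  have "x - a *s y = (r b *s b + x') - (a *s (s b *s b) + a *s y')"
    by (simp add: xs ys scale_right_distrib)
  also have "\<dots> = x' - a *s y'" by (subst ab) (simp add: algebra_simps)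
  finally have diff: "x - a *s y = x' - a *s y'" .
  define W where "W = (T - {b}) \<union> (U - {b})"
  have WB: "W \<subseteq> B0" using T U by (auto simp: W_def)
  have inW: "x' - a *s y' \<in> span W"
    unfolding x'_def y'_def W_def
    by (intro span_diff span_scale span_sum span_base) auto
  show ?thesis
  proof (cases "x - a *s y = 0")
    case True then show ?thesis by blast
  next
    case False
    have W0: "0 \<notin> W" using A0 WB by blast
    have Winj: "inj_on \<nu> W" using B0(3) WB by (rule inj_on_subset)
    have "x' - a *s y' \<noteq> 0" using False diff by simp
    from M1[OF v W0 Winj inW this]
    obtain w where w: "w \<in> W" "\<nu> (x' - a *s y') = \<nu> w" by blast
    have wB: "w \<in> B0" "w \<noteq> b" using w WB by (auto simp: W_def)
    have bB: "b \<in> B0" using b T by auto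
    have ne: "\<nu> w \<noteq> \<nu> x" using wB bB b B0(3) by (metis inj_onD)
    have "\<nu> w \<le> \<nu> x"
    proof (cases "w \<in> T")
      case True then show ?thesis using T by (simp add: Max_ge)
    next
      case False then have "w \<in> U" using w by (auto simp: W_def)
      then show ?thesis using U eq by (simp add: Max_ge)
    qed
    then show ?thesis using ne w diff by (intro exI[of _ a]) auto
  qed
qed

lemma G:
  assumes v: "is_valuation scale \<nu>" and wo: "well_ordered_valuation \<nu>"
    and B0: "\<not> dependent B0" "span B0 = UNIV" "inj_on \<nu> B0"
    and V: "subspace V"
    and h: "\<forall>x\<in>V. x \<noteq> 0 \<longrightarrow> (\<exists>b\<in>B\<inter>V. b \<noteq> 0 \<and> \<nu> b = \<nu> x)"
  shows "V \<subseteq> span (B\<inter>V)"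
proof (rule ccontr)
  assume nt: "\<not> ?thesis"
  define X where "X = \<nu> ` {x\<in>V. x \<noteq> 0 \<and> x \<notin> span (B\<inter>V)}"
  have X1: "X \<subseteq> \<nu> ` (UNIV - {0})" by (auto simp: X_def)
  have X2: "X \<noteq> {}" using nt span_zero by (auto simp: X_def)
  have "\<exists>m\<in>X. \<forall>x\<in>X. m \<le> x" using wo X1 X2
    unfolding well_ordered_valuation_def well_ordered_set_def by blast
  then obtain x0 where x0: "x0 \<in> V" "x0 \<noteq> 0" "x0 \<notin> span (B\<inter>V)"
    and mn: "\<And>z. z \<in> V \<Longrightarrow> z \<noteq> 0 \<Longrightarrow> z \<notin> span (B\<inter>V) \<Longrightarrow> \<nu> x0 \<le> \<nu> z"
    unfolding X_def by auto
  obtain b where b: "b \<in> B\<inter>V" "b \<noteq> 0" "\<nu> b = \<nu> x0" using h x0 by blast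
  obtain a where a: "x0 - a *s b = 0 \<or> \<nu> (x0 - a *s b) < \<nu> x0"
    using Onedim[OF v B0 x0(2) b(2)] b(3) by metis
  have zV: "x0 - a *s b \<in> V" using V x0 b by (intro subspace_diff subspace_scale) auto
  have "x0 - a *s b \<in> span (B\<inter>V)"
  proof (cases "x0 - a *s b = 0")
    case True then show ?thesis using span_zero by simp
  next
    case False
    then have "\<nu> (x0 - a *s b) < \<nu> x0" using a by simp
    then show ?thesis using mn[OF zV False] by (meson not_le)
  qed
  then have "(x0 - a *s b) + a *s b \<in> span (B\<inter>V)"
    using b by (intro span_add) (auto intro: span_scale span_base)
  then show False using x0 by simp
qed

end

theorem mainTheorem6:
  fixes scale :: "'k::field \<Rightarrow> 'v::ab_group_add \<Rightarrow> 'v"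
    and \<nu> :: "'v \<Rightarrow> 'c::linorder"
    and I :: "'i set" and S :: "'i \<Rightarrow> 'v set"
  assumes vs: "vector_space scale"
    and val: "is_valuation scale \<nu>"
    and wo: "well_ordered_valuation \<nu>"
    and inj: "injective_valuation scale \<nu>"
    and sub: "\<forall>i\<in>I. module.subspace scale (S i)"
  shows "(nu_compatible \<nu> I S \<longleftrightarrow>
           (\<exists>B. adapted_basis scale \<nu> B \<and> (\<forall>i\<in>I. is_basis_of scale (B \<inter> S i) (S i))))
       \<and> (\<forall>B. adapted_basis scale \<nu> B \<and> (\<forall>i\<in>I. is_basis_of scale (B \<inter> S i) (S i)) \<longrightarrow>
            (\<forall>J \<subseteq> I.
               is_basis_of scale (B \<inter> (\<Inter>j\<in>J. S j)) (\<Inter>j\<in>J. S j) \<and>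
               \<nu> ` (module.span scale (\<Union>j\<in>J. S j) - {0}) = (\<Union>j\<in>J. \<nu> ` (S j - {0}))))"
proof -
  interpret vector_space scale by (rule vs)
  obtain B0 where "adapted_basis scale \<nu> B0" using inj unfolding injective_valuation_def by blast
  then have B0: "\<not> dependent B0" "span B0 = UNIV" "inj_on \<nu> B0"
    by (auto simp: adapted_basis_def is_basis_of_def)
  have Q: "\<exists>b\<in>B \<inter> (\<Inter>j\<in>J. S j). b \<noteq> 0 \<and> \<nu> b = c"
    if HB: "adapted_basis scale \<nu> B" "\<forall>i\<in>I. is_basis_of scale (B \<inter> S i) (S i)"
      and J: "J \<subseteq> I" "J \<noteq> {}" and c: "\<forall>j\<in>J. c \<in> \<nu> ` (S j - {0})" for B J c
  proof -
    have B: "\<not> dependent B" "inj_on \<nu> B" using HB(1) by (auto simp: adapted_basis_def is_basis_of_def)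
    have B0': "0 \<notin> B" using B(1) dependent_zero by blast
    have bj: "\<exists>bj\<in>B \<inter> S j. \<nu> bj = c" if j: "j \<in> J" for j
    proof -
      obtain x where x: "x \<in> S j" "x \<noteq> 0" "\<nu> x = c" using c j by auto
      have "span (B \<inter> S j) = S j" using HB(2) J j by (auto simp: is_basis_of_def)
      then have xs: "x \<in> span (B \<inter> S j)" using x by simp
      have h0: "0 \<notin> B \<inter> S j" using B0' by blast
      have hi: "inj_on \<nu> (B \<inter> S j)" using B(2) by (rule inj_on_subset) blast
      obtain a where "a \<in> B \<inter> S j" "\<nu> x = \<nu> a" using M1[OF val h0 hi xs x(2)] by blast
      then show ?thesis using x(3) by (intro bexI[of _ a]) simp_all
    qed
    obtain j0 where "j0 \<in> J" using J by blast
    then obtain b where b: "b \<in> B" "b \<in> S j0" "\<nu> b = c" using bj by blast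
    have bS: "b \<in> S j" if jJ: "j \<in> J" for j
    proof -
      obtain b' where "b' \<in> B" "b' \<in> S j" "\<nu> b' = c" using bj[OF jJ] by blast
      then have "b' = b" using b B(2) by (metis inj_onD)
      then show ?thesis using \<open>b' \<in> S j\<close> by simp
    qed
    then show ?thesis using b B0' by (intro bexI[of _ b]) auto
  qed
  have bk: "nu_compatible \<nu> I S"
    if HB: "adapted_basis scale \<nu> B" "\<forall>i\<in>I. is_basis_of scale (B \<inter> S i) (S i)" for B
  proof -
  show ?thesis unfolding nu_compatible_def
  proof (intro allI impI)
    fix J assume J: "J \<subseteq> I" "J \<noteq> {}"
    show "\<nu> ` ((\<Inter>j\<in>J. S j) - {0}) = (\<Inter>j\<in>J. \<nu> ` (S j - {0}))"
    proof
      show "\<nu> ` ((\<Inter>j\<in>J. S j) - {0}) \<subseteq> (\<Inter>j\<in>J. \<nu> ` (S j - {0}))" by blast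
      show "(\<Inter>j\<in>J. \<nu> ` (S j - {0})) \<subseteq> \<nu> ` ((\<Inter>j\<in>J. S j) - {0})"
      proof
        fix c assume "c \<in> (\<Inter>j\<in>J. \<nu> ` (S j - {0}))"
        then obtain b where "b \<in> B \<inter> (\<Inter>j\<in>J. S j)" "b \<noteq> 0" "\<nu> b = c"
          using Q[OF HB J] by blast
        then show "c \<in> \<nu> ` ((\<Inter>j\<in>J. S j) - {0})" by blast
      qed
    qed
  qed
  qed
  have part2: "\<forall>J \<subseteq> I.
               is_basis_of scale (B \<inter> (\<Inter>j\<in>J. S j)) (\<Inter>j\<in>J. S j) \<and>
               \<nu> ` (span (\<Union>j\<in>J. S j) - {0}) = (\<Union>j\<in>J. \<nu> ` (S j - {0}))"
    if HB: "adapted_basis scale \<nu> B" "\<forall>i\<in>I. is_basis_of scale (B \<inter> S i) (S i)" for B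
  proof (intro allI impI conjI)
    have B: "\<not> dependent B" "inj_on \<nu> B" "span B = UNIV"
      using HB(1) by (auto simp: adapted_basis_def is_basis_of_def)
    have B0': "0 \<notin> B" using B(1) dependent_zero by blast
    have Si: "span (B \<inter> S i) = S i" if "i \<in> I" for i
      using HB(2) that by (auto simp: is_basis_of_def)
    fix J assume J: "J \<subseteq> I"
    show "is_basis_of scale (B \<inter> (\<Inter>j\<in>J. S j)) (\<Inter>j\<in>J. S j)"
    proof (cases "J = {}")
      case True then show ?thesis using HB(1) by (simp add: adapted_basis_def)
    next
      case False
      have subV: "subspace (\<Inter>j\<in>J. S j)" using sub J by (intro subspace_Inter) auto
      have "(\<Inter>j\<in>J. S j) \<subseteq> span (B \<inter> (\<Inter>j\<in>J. S j))"
      proof (rule G[OF val wo B0 subV], intro ballI impI)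
        fix x assume x: "x \<in> (\<Inter>j\<in>J. S j)" "x \<noteq> 0"
        show "\<exists>b\<in>B \<inter> (\<Inter>j\<in>J. S j). b \<noteq> 0 \<and> \<nu> b = \<nu> x"
          by (rule Q[OF HB J False]) (use x in blast)
      qed
      moreover have "span (B \<inter> (\<Inter>j\<in>J. S j)) \<subseteq> (\<Inter>j\<in>J. S j)"
        by (rule span_minimal[OF _ subV]) blast
      moreover have "\<not> dependent (B \<inter> (\<Inter>j\<in>J. S j))"
        using B(1) dependent_mono by blast
      ultimately show ?thesis unfolding is_basis_of_def by blast
    qed
    show "\<nu> ` (span (\<Union>j\<in>J. S j) - {0}) = (\<Union>j\<in>J. \<nu> ` (S j - {0}))"
    proof
      show "(\<Union>j\<in>J. \<nu> ` (S j - {0})) \<subseteq> \<nu> ` (span (\<Union>j\<in>J. S j) - {0})"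
        using span_superset[of "\<Union>j\<in>J. S j"] by blast
      have "(\<Union>j\<in>J. S j) \<subseteq> span (B \<inter> (\<Union>j\<in>J. S j))"
      proof
        fix x assume "x \<in> (\<Union>j\<in>J. S j)"
        then obtain j where j: "j \<in> J" "x \<in> S j" by blast
        then have "x \<in> span (B \<inter> S j)" using Si J by auto
        moreover have "span (B \<inter> S j) \<subseteq> span (B \<inter> (\<Union>j\<in>J. S j))"
          using j by (intro span_mono) blast
        ultimately show "x \<in> span (B \<inter> (\<Union>j\<in>J. S j))" by blast
      qed
      then have sp: "span (\<Union>j\<in>J. S j) \<subseteq> span (B \<inter> (\<Union>j\<in>J. S j))"
        by (intro span_minimal) auto
      show "\<nu> ` (span (\<Union>j\<in>J. S j) - {0}) \<subseteq> (\<Union>j\<in>J. \<nu> ` (S j - {0}))"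
      proof
        fix c assume "c \<in> \<nu> ` (span (\<Union>j\<in>J. S j) - {0})"
        then obtain x where x: "x \<in> span (\<Union>j\<in>J. S j)" "x \<noteq> 0" "c = \<nu> x" by blast
        have xs: "x \<in> span (B \<inter> (\<Union>j\<in>J. S j))" using x sp by blast
        have h0: "0 \<notin> B \<inter> (\<Union>j\<in>J. S j)" using B0' by blast
        have hi: "inj_on \<nu> (B \<inter> (\<Union>j\<in>J. S j))" using B(2) by (rule inj_on_subset) blast
        obtain a where "a \<in> B \<inter> (\<Union>j\<in>J. S j)" "\<nu> x = \<nu> a"
          using M1[OF val h0 hi xs x(2)] by blast
        then show "c \<in> (\<Union>j\<in>J. \<nu> ` (S j - {0}))" using x B0' by blast
      qed
    qed
  qed
  have fwd: "\<exists>B. adapted_basis scale \<nu> B \<and> (\<forall>i\<in>I. is_basis_of scale (B \<inter> S i) (S i))"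
    if comp: "nu_compatible \<nu> I S"
  proof -
    define \<Gamma> where "\<Gamma> = \<nu> ` (UNIV - {0})"
    have C: "\<nu> ` ((\<Inter>j\<in>J. S j) - {0}) = (\<Inter>j\<in>J. \<nu> ` (S j - {0}))"
      if "J \<subseteq> I" "J \<noteq> {}" for J
      using comp that unfolding nu_compatible_def by blast
    have ex: "\<forall>c\<in>\<Gamma>. \<exists>x. x \<noteq> 0 \<and> \<nu> x = c \<and> (\<forall>i\<in>I. c \<in> \<nu> ` (S i - {0}) \<longrightarrow> x \<in> S i)"
    proof
      fix c assume c: "c \<in> \<Gamma>"
      show "\<exists>x. x \<noteq> 0 \<and> \<nu> x = c \<and> (\<forall>i\<in>I. c \<in> \<nu> ` (S i - {0}) \<longrightarrow> x \<in> S i)"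
      proof (cases "{i\<in>I. c \<in> \<nu> ` (S i - {0})} = {}")
        case True
        obtain x where "x \<noteq> 0" "\<nu> x = c" using c by (auto simp: \<Gamma>_def)
        then show ?thesis using True by (intro exI[of _ x]) blast
      next
        case False
        let ?J = "{i\<in>I. c \<in> \<nu> ` (S i - {0})}"
        have JI: "?J \<subseteq> I" by blast
        have "c \<in> (\<Inter>j\<in>?J. \<nu> ` (S j - {0}))" by blast
        then have "c \<in> \<nu> ` ((\<Inter>j\<in>?J. S j) - {0})" using C[OF JI False] by simp
        then obtain x where "x \<in> (\<Inter>j\<in>?J. S j)" "x \<noteq> 0" "\<nu> x = c" by blast
        then show ?thesis by (intro exI[of _ x]) blast
      qed
    qed
    from bchoice[OF ex] obtain X where
      X: "\<forall>c\<in>\<Gamma>. X c \<noteq> 0 \<and> \<nu> (X c) = c \<and> (\<forall>i\<in>I. c \<in> \<nu> ` (S i - {0}) \<longrightarrow> X c \<in> S i)"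
      by blast
    define B where "B = X ` \<Gamma>"
    have B0': "0 \<notin> B" using X by (auto simp: B_def)
    have injB: "inj_on \<nu> B" unfolding B_def inj_on_def using X by auto
    have indB: "\<not> dependent B" by (rule Ind[OF val B0' injB])
    have hx: "\<exists>b\<in>B \<inter> V. b \<noteq> 0 \<and> \<nu> b = \<nu> x"
      if xV: "x \<noteq> 0" "X (\<nu> x) \<in> V" for x V
    proof -
      have c: "\<nu> x \<in> \<Gamma>" using xV by (auto simp: \<Gamma>_def)
      have "X (\<nu> x) \<in> B" using c by (simp add: B_def)
      moreover have "X (\<nu> x) \<noteq> 0 \<and> \<nu> (X (\<nu> x)) = \<nu> x" using X c by blast
      ultimately show ?thesis using xV(2) by (intro bexI[of _ "X (\<nu> x)"]) simp_all
    qed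
    have "UNIV \<subseteq> span (B \<inter> UNIV)"
    proof (rule G[OF val wo B0 subspace_UNIV], intro ballI impI)
      fix x :: 'v assume "x \<noteq> 0"
      then show "\<exists>b\<in>B \<inter> UNIV. b \<noteq> 0 \<and> \<nu> b = \<nu> x" by (rule hx) simp
    qed
    then have spB: "span B = UNIV" by auto
    have "is_basis_of scale (B \<inter> S i) (S i)" if i: "i \<in> I" for i
    proof -
      have subi: "subspace (S i)" using sub i by blast
      have "S i \<subseteq> span (B \<inter> S i)"
      proof (rule G[OF val wo B0 subi], intro ballI impI)
        fix x assume x: "x \<in> S i" "x \<noteq> 0"
        have c: "\<nu> x \<in> \<Gamma>" using x by (auto simp: \<Gamma>_def)
        have ci: "\<nu> x \<in> \<nu> ` (S i - {0})" using x by blast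
        have "X (\<nu> x) \<in> S i" using X c i ci by blast
        then show "\<exists>b\<in>B \<inter> S i. b \<noteq> 0 \<and> \<nu> b = \<nu> x" by (rule hx[OF x(2)])
      qed
      moreover have "span (B \<inter> S i) \<subseteq> S i" by (rule span_minimal[OF _ subi]) blast
      moreover have "\<not> dependent (B \<inter> S i)" using indB dependent_mono by blast
      ultimately show ?thesis unfolding is_basis_of_def by blast
    qed
    moreover have "adapted_basis scale \<nu> B"
      using indB spB injB by (simp add: adapted_basis_def is_basis_of_def)
    ultimately show ?thesis by blast
  qed
  have iff: "nu_compatible \<nu> I S \<longleftrightarrow>
           (\<exists>B. adapted_basis scale \<nu> B \<and> (\<forall>i\<in>I. is_basis_of scale (B \<inter> S i) (S i)))"
  proof
    assume "nu_compatible \<nu> I S" then show "\<exists>B. adapted_basis scale \<nu> B \<and> (\<forall>i\<in>I. is_basis_of scale (B \<inter> S i) (S i))" by (rule fwd)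
  next
    assume "\<exists>B. adapted_basis scale \<nu> B \<and> (\<forall>i\<in>I. is_basis_of scale (B \<inter> S i) (S i))"
    then obtain B where "adapted_basis scale \<nu> B" "\<forall>i\<in>I. is_basis_of scale (B \<inter> S i) (S i)" by blast
    then show "nu_compatible \<nu> I S" by (rule bk)
  qed
  show ?thesis
  proof (rule conjI[OF iff], rule allI, rule impI)
    fix B assume H: "adapted_basis scale \<nu> B \<and> (\<forall>i\<in>I. is_basis_of scale (B \<inter> S i) (S i))"
    show "\<forall>J \<subseteq> I.
               is_basis_of scale (B \<inter> (\<Inter>j\<in>J. S j)) (\<Inter>j\<in>J. S j) \<and>
               \<nu> ` (span (\<Union>j\<in>J. S j) - {0}) = (\<Union>j\<in>J. \<nu> ` (S j - {0}))"
      by (rule part2[OF conjunct1[OF H] conjunct2[OF H]])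
  qed
qed

end
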